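(* There is an absolute constant $C$ such that if $E\subset\mathbb{Z}^2$ is sparse with respect to a sequence $(\alpha_k,\beta_k)_{k\ge1}$ (integers, $\alpha_k\le\beta_k$), then the Besicovitch density of $E$ is at most $C\sum_k(\alpha_k/\beta_k)^2$.
   Context: Distances on $\mathbb{Z}^2$ are $\ell_\infty$; the diameter of a set is the maximal distance between its elements; the $\beta$-neighborhood of $X$ is the set of points at distance at most $\beta$ from some point of $X$. For $E\subset\mathbb{Z}^2$ and integers $\beta\ge\alpha>0$, a nonempty $X\subset E$ is an $(\alpha,\beta)$-island in $E$ if its diameter is at most $\alpha$ and the $\beta$-neighborhood of $X$ contains no point of $E\setminus X$. The cleaning process sets $E_0=E$ and obtains $E_i$ from $E_{i-1}$ by removing all $(\alpha_i,\beta_i)$-islands of $E_{i-1}$ (rank $i$ islands); a point is affected at step $i$ if it lies in the $\beta_i$-neighborhood of some rank $i$ island. $E$ is sparse if every point of $E$ is removed at some step and every point of $\mathbb{Z}^2$ is affected at only finitely many steps. The Besicovitch density of $E$ is $\limsup_{n\to\infty}$ of the fraction of points of $E$ in the square of side $n$ centered at a fixed point (independent of the point). *)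

theory Defs
  imports "HOL-Analysis.Analysis" "HOL-Library.Extended_Nonnegative_Real"
begin

type_synonym pt = "int \<times> int"

definition dinf :: "pt \<Rightarrow> pt \<Rightarrow> int" where
  "dinf p q = max \<bar>fst p - fst q\<bar> \<bar>snd p - snd q\<bar>"

definition nbhd :: "int \<Rightarrow> pt set \<Rightarrow> pt set" where
  "nbhd b X = {y. \<exists>x\<in>X. dinf x y \<le> b}"

definition island :: "int \<Rightarrow> int \<Rightarrow> pt set \<Rightarrow> pt set \<Rightarrow> bool" where
  "island a b E X \<longleftrightarrow> X \<noteq> {} \<and> X \<subseteq> E \<and> (\<forall>x\<in>X. \<forall>y\<in>X. dinf x y \<le> a)
     \<and> nbhd b X \<inter> (E - X) = {}"

text \<open>Cleaning process; step i+1 of the paper uses parameters (al i, be i) (0-based sequences).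
  clean al be E i is the paper's E_i.\<close>
fun clean :: "(nat \<Rightarrow> int) \<Rightarrow> (nat \<Rightarrow> int) \<Rightarrow> pt set \<Rightarrow> nat \<Rightarrow> pt set" where
  "clean al be E 0 = E"
| "clean al be E (Suc i) =
     clean al be E i - \<Union>{X. island (al i) (be i) (clean al be E i) X}"

definition affected :: "(nat \<Rightarrow> int) \<Rightarrow> (nat \<Rightarrow> int) \<Rightarrow> pt set \<Rightarrow> nat \<Rightarrow> pt \<Rightarrow> bool" where
  "affected al be E i p \<longleftrightarrow>
     (\<exists>X. island (al i) (be i) (clean al be E i) X \<and> p \<in> nbhd (be i) X)"

definition sparse :: "(nat \<Rightarrow> int) \<Rightarrow> (nat \<Rightarrow> int) \<Rightarrow> pt set \<Rightarrow> bool" where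
  "sparse al be E \<longleftrightarrow> (\<forall>p\<in>E. \<exists>i. p \<notin> clean al be E i)
     \<and> (\<forall>p. finite {i. affected al be E i p})"

definition square :: "pt \<Rightarrow> nat \<Rightarrow> pt set" where
  "square c n = {q. dinf c q \<le> int n}"

definition bes_density :: "pt set \<Rightarrow> pt \<Rightarrow> ennreal" where
  "bes_density E c = limsup (\<lambda>n. ennreal (real (card (E \<inter> square c n)) / (2 * real n + 1)^2))"

end

theory Submission
  imports Defs
begin

lemma div_eq_close:
  fixes u v m :: int
  assumes "0 < m" "u div m = v div m"
  shows "\<bar>u - v\<bar> < m"
proof -
  have "u = m * (v div m) + u mod m" using assms(2) by (metis div_mult_mod_eq mult.commute)
  moreover have "v = m * (v div m) + v mod m" by simp
  moreover have "0 \<le> u mod m" "u mod m < m" "0 \<le> v mod m" "v mod m < m"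
    using assms by simp_all
  ultimately show ?thesis using assms(2) by linarith
qed

lemma square_eq: "square x m = {fst x - int m..fst x + int m} \<times> {snd x - int m..snd x + int m}"
  by (auto simp: square_def dinf_def)

lemma card_square: "card (square x m) = (2*m+1)^2" and finite_square: "finite (square x m)"
proof -
  have e: "nat (1 + int m * 2) = 2*m+1" by simp
  have "card (square x m) = nat (1 + int m * 2) * nat (1 + int m * 2)" unfolding square_eq
    by (simp add: card_cartesian_product add.commute mult.commute)
  thus "card (square x m) = (2*m+1)^2" unfolding e by (simp add: power2_eq_square)
  show "finite (square x m)" unfolding square_eq by simp
qed

lemma island_close:
  assumes "x \<in> \<Union>{X. island a b A X}" "y \<in> A" "dinf x y \<le> b"
  shows "dinf x y \<le> a"
proof -
  obtain X where X: "island a b A X" "x \<in> X" using assms(1) by blast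
  have "y \<in> nbhd b X" using X assms(3) by (auto simp: nbhd_def)
  hence "y \<in> X" using X(1) assms(2) unfolding island_def by blast
  thus ?thesis using X unfolding island_def by blast
qed

lemma count_bound:
  fixes A :: "pt set" and a b :: int and c :: pt and n :: nat
  assumes a0: "0 < a" and ab: "a \<le> b"
  defines "F \<equiv> (\<Union>{X. island a b A X}) \<inter> square c n"
  shows "real (card F) \<le> (real_of_int (2*int n div (b+1)) + 1)^2 * (2 * real_of_int a + 1)^2"
proof -
  define g where "g q = ((fst q - fst c + int n) div (b+1), (snd q - snd c + int n) div (b+1))" for q :: pt
  define M where "M = 2*int n div (b+1)"
  have b1: "0 < b + 1" using a0 ab by simp
  have M0: "0 \<le> M" unfolding M_def using b1 by (simp add: pos_imp_zdiv_nonneg_iff)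
  have finF: "finite F" unfolding F_def using finite_square by blast
  have UA: "\<Union>{X. island a b A X} \<subseteq> A" unfolding island_def by blast
  have gF: "g ` F \<subseteq> {0..M} \<times> {0..M}"
  proof
    fix j assume "j \<in> g ` F"
    then obtain q where q: "q \<in> F" "j = g q" by blast
    have "dinf c q \<le> int n" using q unfolding F_def square_def by simp
    hence h: "0 \<le> fst q - fst c + int n" "fst q - fst c + int n \<le> 2 * int n"
      "0 \<le> snd q - snd c + int n" "snd q - snd c + int n \<le> 2 * int n"
      unfolding dinf_def by auto
    show "j \<in> {0..M} \<times> {0..M}" unfolding q(2) g_def M_def
      using h b1 by (auto simp: pos_imp_zdiv_nonneg_iff zdiv_mono1)
  qed
  have fib: "card {q\<in>F. g q = j} \<le> (2*nat a+1)^2" if jF: "j \<in> g ` F" for j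
  proof -
    obtain x0 where x0: "x0 \<in> F" "g x0 = j" using jF by blast
    have "{q\<in>F. g q = j} \<subseteq> square x0 (nat a)"
    proof
      fix q assume "q \<in> {q\<in>F. g q = j}"
      hence q: "q \<in> F" "g q = g x0" using x0 by auto
      have d1: "\<bar>(fst x0 - fst c + int n) - (fst q - fst c + int n)\<bar> < b + 1"
        by (rule div_eq_close[OF b1]) (use q(2) in \<open>simp add: g_def\<close>)
      have d2: "\<bar>(snd x0 - snd c + int n) - (snd q - snd c + int n)\<bar> < b + 1"
        by (rule div_eq_close[OF b1]) (use q(2) in \<open>simp add: g_def\<close>)
      have "dinf x0 q \<le> b" using d1 d2 unfolding dinf_def by simp
      moreover have "x0 \<in> \<Union>{X. island a b A X}" using x0 unfolding F_def by blast
      moreover have "q \<in> A" using q UA unfolding F_def by blast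
      ultimately have "dinf x0 q \<le> a" using island_close by blast
      thus "q \<in> square x0 (nat a)" unfolding square_def using a0 by simp
    qed
    hence "card {q\<in>F. g q = j} \<le> card (square x0 (nat a))"
      by (rule card_mono[OF finite_square])
    thus ?thesis by (simp add: card_square)
  qed
  have eq: "(\<Union>j\<in>g`F. {q\<in>F. g q = j}) = F" by auto
  have "card F \<le> (\<Sum>j\<in>g`F. card {q\<in>F. g q = j})"
    using card_UN_le[of "g`F" "\<lambda>j. {q\<in>F. g q = j}"] finF unfolding eq by simp
  also have "\<dots> \<le> card (g`F) * (2*nat a+1)^2"
    using sum_bounded_above[of "g`F" "\<lambda>j. card {q\<in>F. g q = j}" "(2*nat a+1)^2", OF fib] by simp
  also have "card (g`F) \<le> card ({0..M} \<times> {0..M})"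
    by (rule card_mono[OF _ gF]) simp
  hence "card (g`F) * (2*nat a+1)^2 \<le> card ({0..M} \<times> {0..M}) * (2*nat a+1)^2"
    by simp
  finally have "card F \<le> nat (M+1) * nat (M+1) * (2*nat a+1)^2"
    by (simp add: card_cartesian_product add.commute)
  hence "real (card F) \<le> real (nat (M+1) * nat (M+1) * (2*nat a+1)^2)"
    by linarith
  also have "\<dots> = (real_of_int M + 1)^2 * (2 * real_of_int a + 1)^2"
    using M0 a0 by (simp add: power2_eq_square of_nat_nat algebra_simps)
  finally show ?thesis unfolding M_def .
qed

lemma arith_small:
  fixes m a :: real
  assumes "0 \<le> m" "m \<le> 1" "1 \<le> a"
  shows "(m+1)^2 * (2*a+1)^2 \<le> 36 * a^2"
proof -
  have "(m+1)^2 \<le> 2^2" using assms by (intro power_mono) auto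
  moreover have "(2*a+1)^2 \<le> (3*a)^2" using assms by (intro power_mono) auto
  ultimately have "(m+1)^2 * (2*a+1)^2 \<le> 2^2 * (3*a)^2"
    by (intro mult_mono) auto
  thus ?thesis by (simp add: power_mult_distrib)
qed

lemma arith_big:
  fixes m a b n :: real
  assumes "0 \<le> m" "1 \<le> a" "a \<le> b" "b < n" "(b+1)*m \<le> 2*n"
  shows "(m+1)^2 * (2*a+1)^2 \<le> 81 * n^2 * (a/b)^2"
proof -
  have b0: "0 < b" using assms by simp
  have "b*(m+1) \<le> 3*n" using assms by (simp add: algebra_simps)
  hence m1: "m+1 \<le> 3*n/b" using b0 by (simp add: field_simps)
  have "(m+1)^2 \<le> (3*n/b)^2" using m1 assms by (intro power_mono) auto
  moreover have "(2*a+1)^2 \<le> (3*a)^2" using assms by (intro power_mono) auto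
  ultimately have "(m+1)^2 * (2*a+1)^2 \<le> (3*n/b)^2 * (3*a)^2"
    by (intro mult_mono) auto
  also have "\<dots> = 81 * n^2 * (a/b)^2" by (simp add: power_mult_distrib power_divide)
  finally show ?thesis .
qed

lemma div_mult_le_int:
  fixes x b :: int
  assumes "0 < b" shows "b * (x div b) \<le> x"
proof -
  have "x = b * (x div b) + x mod b" by simp
  moreover have "0 \<le> x mod b" using assms by simp
  ultimately show ?thesis by linarith
qed

lemma clean_antimono: "i \<le> j \<Longrightarrow> clean al be E j \<subseteq> clean al be E i"
proof (induction j rule: dec_induct)
  case base then show ?case by simp
next
  case (step j) then show ?case by auto
qed

lemma removed_at:
  assumes "p \<in> E" "p \<notin> clean al be E N"
  shows "\<exists>k<N. p \<in> \<Union>{X. island (al k) (be k) (clean al be E k) X}"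
  using assms(2)
proof (induction N)
  case 0 then show ?case using assms(1) by simp
next
  case (Suc N)
  show ?case
  proof (cases "p \<in> clean al be E N")
    case True
    then show ?thesis using Suc.prems by auto
  next
    case False
    then show ?thesis using Suc.IH by (meson less_Suc_eq)
  qed
qed

lemma step_bound:
  fixes al be :: "nat \<Rightarrow> int"
  assumes pos: "0 < al k" "al k \<le> be k"
  shows "real (card (\<Union>{X. island (al k) (be k) (clean al be E k) X} \<inter> square c n))
    \<le> 81 * (real n)^2 * (real_of_int (al k) / real_of_int (be k))^2
       + (if affected al be E k c then 36 * (real_of_int (al k))^2 else 0)"
proof -
  define F where "F = \<Union>{X. island (al k) (be k) (clean al be E k) X} \<inter> square c n"
  define M where "M = 2*int n div (be k + 1)"
  have cb: "real (card F) \<le> (real_of_int M + 1)^2 * (2 * real_of_int (al k) + 1)^2"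
    unfolding F_def M_def by (rule count_bound[OF pos])
  have M0: "0 \<le> M" unfolding M_def using pos by (simp add: pos_imp_zdiv_nonneg_iff)
  have Mle: "(be k + 1) * M \<le> 2 * int n" unfolding M_def by (rule div_mult_le_int) (use pos in simp)
  hence "real_of_int ((be k + 1) * M) \<le> real_of_int (2 * int n)"
    by (simp only: of_int_le_iff)
  hence Mle': "(real_of_int (be k) + 1) * real_of_int M \<le> 2 * real n"
    by simp
  have nn: "0 \<le> 81 * (real n)^2 * (real_of_int (al k) / real_of_int (be k))^2" by simp
  show ?thesis
  proof (cases "F = {}")
    case True
    then show ?thesis unfolding F_def[symmetric] using nn by simp
  next
    case False
    then obtain q where q: "q \<in> F" by blast
    show ?thesis
    proof (cases "int n \<le> be k")
      case True
      have aff: "affected al be E k c"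
      proof -
        obtain X where X: "island (al k) (be k) (clean al be E k) X" "q \<in> X"
          using q unfolding F_def by blast
        have "dinf c q \<le> int n" using q unfolding F_def square_def by simp
        hence "dinf q c \<le> be k" using True unfolding dinf_def by (simp add: abs_minus_commute)
        hence "c \<in> nbhd (be k) X" using X(2) unfolding nbhd_def by blast
        thus ?thesis unfolding affected_def using X(1) by blast
      qed
      have "(be k + 1) * 2 = 2 * be k + 2" by simp
      hence "(be k + 1) * M < (be k + 1) * 2" using Mle True by linarith
      hence "M < 2" by (rule mult_left_less_imp_less) (use pos in simp)
      hence "M \<le> 1" by simp
      hence "(real_of_int M + 1)^2 * (2 * real_of_int (al k) + 1)^2 \<le> 36 * (real_of_int (al k))^2"
        using M0 pos by (intro arith_small) auto
      moreover have "(if affected al be E k c then 36 * (real_of_int (al k))^2 else 0) = 36 * (real_of_int (al k))^2"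
        using aff by simp
      ultimately show ?thesis using cb nn unfolding F_def by linarith
    next
      case False
      have "(real_of_int M + 1)^2 * (2 * real_of_int (al k) + 1)^2
          \<le> 81 * (real n)^2 * (real_of_int (al k) / real_of_int (be k))^2"
        using M0 pos False Mle' by (intro arith_big) auto
      moreover have "0 \<le> (if affected al be E k c then 36 * (real_of_int (al k))^2 else 0)"
        by simp
      ultimately show ?thesis using cb unfolding F_def by linarith
    qed
  qed
qed

lemma card_bound_n:
  fixes al be :: "nat \<Rightarrow> int" and c :: pt and n :: nat and E :: "pt set"
  assumes pos: "\<forall>k. 0 < al k \<and> al k \<le> be k" and sp: "sparse al be E"
  defines "K \<equiv> {k. affected al be E k c}"
  defines "D \<equiv> (\<Sum>k\<in>K. 36 * (real_of_int (al k))^2)"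
  shows "\<exists>N. real (card (E \<inter> square c n))
           \<le> 81 * (real n)^2 * (\<Sum>k<N. (real_of_int (al k) / real_of_int (be k))^2) + D"
proof -
  define S where "S = square c n"
  define I where "I k = \<Union>{X. island (al k) (be k) (clean al be E k) X} \<inter> S" for k
  define F0 where "F0 = E \<inter> S"
  have finK: "finite K" using sp unfolding sparse_def K_def by blast
  have finF0: "finite F0" unfolding F0_def S_def using finite_square by blast
  define ip where "ip p = (SOME i. p \<notin> clean al be E i)" for p
  define N where "N = Max (ip ` F0)"
  have notin: "p \<notin> clean al be E N" if "p \<in> F0" for p
  proof -
    have "\<exists>i. p \<notin> clean al be E i" using sp that unfolding sparse_def F0_def by blast
    hence "p \<notin> clean al be E (ip p)" unfolding ip_def by (rule someI_ex)
    moreover have "ip p \<le> N" unfolding N_def using finF0 that by simp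
    ultimately show ?thesis using clean_antimono by blast
  qed
  have sub: "F0 \<subseteq> (\<Union>k<N. I k)"
  proof
    fix p assume p: "p \<in> F0"
    then obtain k where "k < N" "p \<in> \<Union>{X. island (al k) (be k) (clean al be E k) X}"
      using removed_at[of p E al be N] notin[OF p] unfolding F0_def by blast
    thus "p \<in> (\<Union>k<N. I k)" using p unfolding I_def F0_def by blast
  qed
  have finU: "finite (\<Union>k<N. I k)" unfolding I_def S_def using finite_square by auto
  have "card F0 \<le> card (\<Union>k<N. I k)" by (rule card_mono[OF finU sub])
  also have "\<dots> \<le> (\<Sum>k<N. card (I k))" by (rule card_UN_le) simp
  finally have "real (card F0) \<le> (\<Sum>k<N. real (card (I k)))" by (simp flip: of_nat_sum)
  also have "\<dots> \<le> (\<Sum>k<N. 81 * (real n)^2 * (real_of_int (al k) / real_of_int (be k))^2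
       + (if k \<in> K then 36 * (real_of_int (al k))^2 else 0))"
    apply (rule sum_mono)
    unfolding I_def S_def K_def using step_bound pos by simp
  also have "\<dots> = 81 * (real n)^2 * (\<Sum>k<N. (real_of_int (al k) / real_of_int (be k))^2)
       + (\<Sum>k\<in>{..<N} \<inter> K. 36 * (real_of_int (al k))^2)"
    by (simp add: sum.distrib sum_distrib_left sum.inter_restrict)
  also have "(\<Sum>k\<in>{..<N} \<inter> K. 36 * (real_of_int (al k))^2) \<le> D"
    unfolding D_def by (rule sum_mono2[OF finK]) auto
  finally show ?thesis unfolding F0_def S_def by auto
qed

lemma ratio_bound:
  fixes x P D :: real and n :: nat
  assumes "x \<le> 81 * (real n)^2 * P + D" "0 \<le> P"
  shows "x / (2 * real n + 1)^2 \<le> 81/4 * P + D / (2 * real n + 1)^2"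
proof -
  define s where "s = (2 * real n + 1)^2"
  define m where "m = (real n)^2"
  have s0: "0 < s" unfolding s_def by (simp add: add_pos_nonneg)
  have "4 * m \<le> s" unfolding s_def m_def by (simp add: power2_eq_square algebra_simps)
  hence "4 * m * P \<le> s * P" using assms(2) by (rule mult_right_mono)
  moreover have "81 * m * P = 81/4 * (4 * m * P)" by simp
  moreover have "81/4 * P * s = 81/4 * (s * P)" by simp
  ultimately have "x \<le> 81/4 * P * s + D" using assms(1) unfolding m_def[symmetric] by linarith
  hence "x / s \<le> (81/4 * P * s + D) / s" using s0 by (simp add: divide_right_mono)
  also have "\<dots> = 81/4 * P + D / s" using s0 by (simp add: add_divide_distrib)
  finally show ?thesis unfolding s_def .
qed

theorem lemma2:
  "\<exists>C::real. \<forall>(E::pt set) (al::nat \<Rightarrow> int) (be::nat \<Rightarrow> int) (c::pt).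
     (\<forall>k. 0 < al k \<and> al k \<le> be k) \<and> sparse al be E \<longrightarrow>
     bes_density E c \<le> ennreal C * (\<Sum>k. ennreal ((real_of_int (al k) / real_of_int (be k))^2))"
proof (intro exI allI impI)
  fix E :: "pt set" and al be :: "nat \<Rightarrow> int" and c :: pt
  assume h: "(\<forall>k. 0 < al k \<and> al k \<le> be k) \<and> sparse al be E"
  define t where "t k = (real_of_int (al k) / real_of_int (be k))^2" for k
  define T where "T = (\<Sum>k. ennreal (t k))"
  define D where "D = (\<Sum>k\<in>{k. affected al be E k c}. 36 * (real_of_int (al k))^2)"
  define g where "g n = ennreal (81/4) * T + ennreal (D / (2 * real n + 1)^2)" for n :: nat
  have D0: "0 \<le> D" unfolding D_def by (simp add: sum_nonneg)
  have fg: "ennreal (real (card (E \<inter> square c n)) / (2 * real n + 1)^2) \<le> g n" for n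
  proof -
    obtain N where N: "real (card (E \<inter> square c n)) \<le> 81 * (real n)^2 * (\<Sum>k<N. t k) + D"
      using card_bound_n[of al be E c n] h unfolding D_def t_def by blast
    have P0: "0 \<le> (\<Sum>k<N. t k)" unfolding t_def by (simp add: sum_nonneg)
    have "real (card (E \<inter> square c n)) / (2 * real n + 1)^2 \<le> 81/4 * (\<Sum>k<N. t k) + D / (2 * real n + 1)^2"
      by (rule ratio_bound[OF N P0])
    hence "ennreal (real (card (E \<inter> square c n)) / (2 * real n + 1)^2)
        \<le> ennreal (81/4 * (\<Sum>k<N. t k) + D / (2 * real n + 1)^2)"
      by (rule ennreal_leI)
    also have "\<dots> = ennreal (81/4) * ennreal (\<Sum>k<N. t k) + ennreal (D / (2 * real n + 1)^2)"
      using P0 D0 by (subst ennreal_plus) (simp_all add: ennreal_mult[symmetric] del: ennreal_numeral)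
    also have "ennreal (\<Sum>k<N. t k) = (\<Sum>k<N. ennreal (t k))"
      unfolding t_def by simp
    also have "(\<Sum>k<N. ennreal (t k)) \<le> T"
      unfolding T_def by (rule sum_le_suminf) auto
    finally show ?thesis unfolding g_def by (simp add: add_right_mono mult_left_mono)
  qed
  have lim0: "(\<lambda>n::nat. D / (2 * real n + 1)^2) \<longlonglongrightarrow> 0"
  proof (rule Lim_null_comparison)
    show "(\<lambda>n. D * inverse (real (Suc n))) \<longlonglongrightarrow> 0"
      by (intro tendsto_mult_right_zero LIMSEQ_inverse_real_of_nat)
    show "\<forall>\<^sub>F n in sequentially. norm (D / (2 * real n + 1)^2) \<le> D * inverse (real (Suc n))"
    proof (intro always_eventually allI)
      fix n :: nat
      have "real (Suc n) \<le> (2 * real n + 1)^2" by (simp add: power2_eq_square algebra_simps)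
      hence "D / (2 * real n + 1)^2 \<le> D / real (Suc n)"
        using D0 by (intro divide_left_mono) auto
      thus "norm (D / (2 * real n + 1)^2) \<le> D * inverse (real (Suc n))"
        using D0 by (simp add: divide_inverse)
    qed
  qed
  have "g \<longlonglongrightarrow> ennreal (81/4) * T + ennreal 0"
    unfolding g_def by (intro tendsto_add tendsto_const tendsto_ennrealI lim0)
  hence lg: "limsup g = ennreal (81/4) * T" by (simp add: lim_imp_Limsup)
  have "bes_density E c \<le> limsup g"
    unfolding bes_density_def by (rule Limsup_mono) (simp add: fg)
  thus "bes_density E c \<le> ennreal (81/4) * (\<Sum>k. ennreal ((real_of_int (al k) / real_of_int (be k))^2))"
    using lg unfolding T_def t_def by simp
qed

end
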